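(* (1) If $\mathbf n_1=(n_{1,0},\dots,n_{1,N})$ and $\mathbf n_2=(n_{2,0},\dots,n_{2,N})$ satisfy $\tilde n_{1,i}\ge\tilde n_{2,i}$ for all $i=0,\dots,N$ (tildes denoting nondecreasing rearrangements), then $d_{\mathbf n_1}(r)\ge d_{\mathbf n_2}(r)$ for all $r\ge0$. (2) If $\mathbf n_1=(n_{1,0},\dots,n_{1,N_1})$ and $\mathbf n_2=(n_{2,0},\dots,n_{2,N_2})$ are such that the multiset $\{n_{2,0},\dots,n_{2,N_2}\}$ is contained in the multiset $\{n_{1,0},\dots,n_{1,N_1}\}$, then $d_{\mathbf n_1}(r)\le d_{\mathbf n_2}(r)$ for all $r\ge0$.
   Context: For a vector $\mathbf n=(n_0,\dots,n_N)$ of positive integers ($N\ge1$), let $\tilde n_0\le\cdots\le\tilde n_N$ be its nondecreasing rearrangement, $n_{\min}=\tilde n_0$, $c_i=1-i+\min_{k'=1,\dots,N}\lfloor(\sum_{l=0}^{k'}\tilde n_l-i)/k'\rfloor$ for $i=1,\dots,n_{\min}$, and $d_{\mathbf n}(k)=\sum_{i=k+1}^{n_{\min}}c_i$ for integers $0\le k\le n_{\min}$; $d_{\mathbf n}(r)$ for real $r\in[0,n_{\min}]$ is the piecewise-linear interpolation of these points, and $d_{\mathbf n}(r)=0$ for $r>n_{\min}$. This is the diversity-multiplexing tradeoff of the $(n_0,\dots,n_N)$ Rayleigh product channel $\mathbf y=\sqrt{\mathsf{SNR}/(n_1\cdots n_N)}\mathbf H_1\cdots\mathbf H_N\mathbf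 x+\mathbf z$ with independent i.i.d. $\mathcal{CN}(0,1)$ matrices $\mathbf H_i\in\mathbb C^{n_{i-1}\times n_i}$. *)

theory Defs
  imports Complex_Main "HOL-Library.Multiset"
begin

text \<open>A channel configuration n = (n_0,...,n_N) is a list of positive naturals of length N+1, N \<ge> 1.
  The nondecreasing rearrangement is sort ns; its l-th entry (0-based) is ntilde_l.\<close>

definition valid_cfg :: "nat list \<Rightarrow> bool" where
  "valid_cfg ns \<longleftrightarrow> length ns \<ge> 2 \<and> (\<forall>x\<in>set ns. x > 0)"

definition n_min :: "nat list \<Rightarrow> nat" where
  "n_min ns = hd (sort ns)"

definition c_coef :: "nat list \<Rightarrow> nat \<Rightarrow> int" where
  "c_coef ns i = 1 - int i +
     Min ((\<lambda>k. \<lfloor>(real (\<Sum>l=0..k. sort ns ! l) - real i) / real k\<rfloor>) ` {1..length ns - 1})"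

definition d_int :: "nat list \<Rightarrow> nat \<Rightarrow> int" where
  "d_int ns k = (\<Sum>i=k+1..n_min ns. c_coef ns i)"

definition dmt :: "nat list \<Rightarrow> real \<Rightarrow> real" where
  "dmt ns r = (if r > real (n_min ns) then 0 else
     (let k = nat \<lfloor>r\<rfloor> in
       real_of_int (d_int ns k) + (r - real k) * real_of_int (d_int ns (k+1) - d_int ns k)))"

end

theory Submission
  imports Defs
begin

lemma nmin_eq: "ns \<noteq> [] \<Longrightarrow> n_min ns = sort ns ! 0"
  proof -
  assume "ns \<noteq> []"
  hence "sort ns \<noteq> []" by (metis length_0_conv length_sort)
  thus ?thesis by (simp add: n_min_def hd_conv_nth)
qed

lemma c_ge1:
  assumes v: "valid_cfg ns" and i: "i \<le> n_min ns"
  shows "c_coef ns i \<ge> 1"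
proof -
  let ?s = "sort ns"
  have len: "length ns \<ge> 2" using v by (simp add: valid_cfg_def)
  have ne: "ns \<noteq> []" using len by auto
  have fin: "finite {1..length ns - 1}" "{1..length ns - 1} \<noteq> {}" using len by auto
  have "\<forall>k\<in>{1..length ns - 1}. \<lfloor>(real (\<Sum>l=0..k. ?s ! l) - real i) / real k\<rfloor> \<ge> int i"
  proof
    fix k assume k: "k \<in> {1..length ns - 1}"
    have "\<forall>l\<in>{0..k}. i \<le> ?s ! l"
    proof
      fix l assume l: "l \<in> {0..k}"
      have "?s ! 0 \<le> ?s ! l" using k l len by (intro sorted_nth_mono) auto
      then show "i \<le> ?s ! l" using i nmin_eq[OF ne] by simp
    qed
    hence "(\<Sum>l=0..k. i) \<le> (\<Sum>l=0..k. ?s ! l)" by (intro sum_mono) auto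
    hence S: "real ((k+1) * i) \<le> real (\<Sum>l=0..k. ?s ! l)" by (simp only: sum_constant card_atLeastAtMost of_nat_le_iff) simp
    have kp: "real k > 0" using k by auto
    have "real i \<le> (real (\<Sum>l=0..k. ?s ! l) - real i) / real k"
      using S kp by (simp add: field_simps)
    thus "\<lfloor>(real (\<Sum>l=0..k. ?s ! l) - real i) / real k\<rfloor> \<ge> int i"
      by (metis floor_mono floor_of_nat)
  qed
  hence "Min ((\<lambda>k. \<lfloor>(real (\<Sum>l=0..k. ?s ! l) - real i) / real k\<rfloor>) ` {1..length ns - 1}) \<ge> int i"
    using fin by (simp add: Min_ge_iff)
  thus ?thesis unfolding c_coef_def by simp
qed

lemma d_nonneg: "valid_cfg ns \<Longrightarrow> d_int ns k \<ge> 0"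
  unfolding d_int_def using c_ge1
  by (intro sum_nonneg) (smt (verit) atLeastAtMost_iff)

lemma c_le:
  assumes la: "length a \<ge> length b" and lb: "length b \<ge> 2"
    and le: "\<forall>l<length b. sort a ! l \<le> sort b ! l"
  shows "c_coef a i \<le> c_coef b i"
proof -
  let ?f = "\<lambda>ns k. \<lfloor>(real (\<Sum>l=0..k. sort ns ! l) - real i) / real k\<rfloor>"
  have finb: "finite {1..length b - 1}" "{1..length b - 1} \<noteq> {}" using lb by auto
  obtain k0 where k0: "k0 \<in> {1..length b - 1}"
    and km: "Min (?f b ` {1..length b - 1}) = ?f b k0"
    proof -
    have "Min (?f b ` {1..length b - 1}) \<in> ?f b ` {1..length b - 1}"
      using finb by (intro Min_in) auto
    thus ?thesis using that by blast
  qed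
  have k0a: "k0 \<in> {1..length a - 1}" using k0 la by auto
  have "(\<Sum>l=0..k0. sort a ! l) \<le> (\<Sum>l=0..k0. sort b ! l)"
    using le k0 lb by (intro sum_mono) auto
  hence "real (\<Sum>l=0..k0. sort a ! l) \<le> real (\<Sum>l=0..k0. sort b ! l)" by (simp only: of_nat_le_iff)
  hence "?f a k0 \<le> ?f b k0"
    by (intro floor_mono divide_right_mono diff_right_mono) auto
  moreover have "Min (?f a ` {1..length a - 1}) \<le> ?f a k0"
    using k0a by (intro Min_le) auto
  ultimately show ?thesis unfolding c_coef_def using km by simp
qed

lemma dmt_nonneg:
  assumes v: "valid_cfg ns" and r: "r \<ge> 0"
  shows "dmt ns r \<ge> 0"
proof (cases "r > real (n_min ns)")
  case True thus ?thesis by (simp add: dmt_def)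
next
  case False
  define k where "k = nat \<lfloor>r\<rfloor>"
  have rk: "real k \<le> r" "r < real k + 1" using r unfolding k_def by linarith+
  define t where "t = r - real k"
  have t: "0 \<le> t" "t \<le> 1" using rk unfolding t_def by auto
  have "dmt ns r = (1 - t) * real_of_int (d_int ns k) + t * real_of_int (d_int ns (k+1))"
    using False unfolding dmt_def k_def[symmetric] t_def Let_def by (simp add: algebra_simps)
  also have "\<dots> \<ge> 0" using t d_nonneg[OF v] by (intro add_nonneg_nonneg mult_nonneg_nonneg) auto
  finally show ?thesis .
qed

lemma dmt_cmp:
  assumes r: "r \<ge> 0" "r \<le> real (n_min a)" "r \<le> real (n_min b)"
    and d: "\<And>j. d_int a j \<le> d_int b j"
  shows "dmt a r \<le> dmt b r"
proof -
  define k where "k = nat \<lfloor>r\<rfloor>"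
  have rk: "real k \<le> r" "r < real k + 1" using r unfolding k_def by linarith+
  define t where "t = r - real k"
  have t: "0 \<le> t" "t \<le> 1" using rk unfolding t_def by auto
  have ea: "dmt a r = (1 - t) * real_of_int (d_int a k) + t * real_of_int (d_int a (k+1))"
    using r unfolding dmt_def k_def[symmetric] t_def Let_def by (simp add: algebra_simps)
  have eb: "dmt b r = (1 - t) * real_of_int (d_int b k) + t * real_of_int (d_int b (k+1))"
    using r unfolding dmt_def k_def[symmetric] t_def Let_def by (simp add: algebra_simps)
  have "(1 - t) * real_of_int (d_int a k) \<le> (1 - t) * real_of_int (d_int b k)"
    using t d by (intro mult_left_mono) auto
  moreover have "t * real_of_int (d_int a (k+1)) \<le> t * real_of_int (d_int b (k+1))"
    using t d by (intro mult_left_mono) auto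
  ultimately show ?thesis using ea eb by linarith
qed

lemma d_cmp:
  assumes vb: "valid_cfg b" and m: "n_min a \<le> n_min b"
    and c: "\<And>i. c_coef a i \<le> c_coef b i"
  shows "d_int a j \<le> d_int b j"
proof -
  have "d_int a j \<le> (\<Sum>i=j+1..n_min a. c_coef b i)"
    unfolding d_int_def using c by (intro sum_mono) auto
  also have "\<dots> \<le> (\<Sum>i=j+1..n_min b. c_coef b i)"
    using m c_ge1[OF vb] by (intro sum_mono2) (auto, smt (verit))
  finally show ?thesis unfolding d_int_def .
qed

lemma sort_sub:
  fixes a b :: "nat list"
  assumes sub: "mset b \<subseteq># mset a" and l: "l < length b"
  shows "sort a ! l \<le> sort b ! l"
proof (rule ccontr)
  assume "\<not> ?thesis"
  hence gt: "sort b ! l < sort a ! l" by simp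
  let ?x = "sort b ! l"
  let ?P = "\<lambda>y. y \<le> ?x"
  have la: "length b \<le> length a" using sub by (metis size_mset size_mset_mono)
  have "size (filter_mset ?P (mset b)) \<le> size (filter_mset ?P (mset a))"
    using sub by (intro size_mset_mono multiset_filter_mono)
  hence A: "length (filter ?P (sort b)) \<le> length (filter ?P (sort a))"
    by (metis mset_filter mset_sort size_mset)
  have "filter ?P (take (Suc l) (sort b)) = take (Suc l) (sort b)"
  proof (rule filter_True, rule ballI)
    fix y assume "y \<in> set (take (Suc l) (sort b))"
    then obtain j where j: "j < Suc l" "j < length b" "y = sort b ! j"
      by (auto simp: in_set_conv_nth)
    thus "?P y" using l by (auto intro: sorted_nth_mono)
  qed
  hence "length (filter ?P (take (Suc l) (sort b))) = Suc l" using l by simp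
  moreover have "length (filter ?P (take (Suc l) (sort b))) \<le> length (filter ?P (sort b))"
    by (metis append_take_drop_id filter_append length_append le_add1)
  ultimately have B: "Suc l \<le> length (filter ?P (sort b))" by simp
  have "filter ?P (drop l (sort a)) = []"
  proof (rule filter_False, rule ballI)
    fix y assume "y \<in> set (drop l (sort a))"
    then obtain j where j: "j < length a - l" "y = sort a ! (l + j)"
      by (auto simp: in_set_conv_nth)
    have "sort a ! l \<le> sort a ! (l + j)" using j by (intro sorted_nth_mono) auto
    thus "\<not> ?P y" using gt j by simp
  qed
  hence "length (filter ?P (sort a)) = length (filter ?P (take l (sort a)))"
    by (metis append_take_drop_id filter_append append_Nil2)
  also have "\<dots> \<le> l" by (metis length_filter_le length_take min.bounded_iff order.trans le_refl)
  finally show False using A B by simp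
qed

theorem corollary1:
  shows "(\<forall>n1 n2 r. valid_cfg n1 \<and> valid_cfg n2 \<and> length n1 = length n2 \<and>
            (\<forall>i<length n1. sort n1 ! i \<ge> sort n2 ! i) \<and> r \<ge> 0
            \<longrightarrow> dmt n1 r \<ge> dmt n2 r)
       \<and> (\<forall>n1 n2 r. valid_cfg n1 \<and> valid_cfg n2 \<and> mset n2 \<subseteq># mset n1 \<and> r \<ge> 0
            \<longrightarrow> dmt n1 r \<le> dmt n2 r)"
proof (intro conjI allI impI)
  fix n1 n2 :: "nat list" and r :: real
  assume h: "valid_cfg n1 \<and> valid_cfg n2 \<and> length n1 = length n2 \<and>
            (\<forall>i<length n1. sort n1 ! i \<ge> sort n2 ! i) \<and> r \<ge> 0"
  have l2: "length n1 \<ge> 2" "length n2 \<ge> 2" using h by (auto simp: valid_cfg_def)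
  have m: "n_min n2 \<le> n_min n1"
    proof -
    have "n1 \<noteq> []" "n2 \<noteq> []" using l2 by auto
    moreover have "sort n2 ! 0 \<le> sort n1 ! 0" using h l2 by (metis less_le_trans pos2)
    ultimately show ?thesis by (simp add: nmin_eq)
  qed
  show "dmt n1 r \<ge> dmt n2 r"
  proof (cases "r > real (n_min n2)")
    case True thus ?thesis using dmt_nonneg h by (simp add: dmt_def)
  next
    case False
    have c: "\<And>i. c_coef n2 i \<le> c_coef n1 i" using h l2 by (intro c_le) auto
    show ?thesis using False m h d_cmp[OF _ m c] by (intro dmt_cmp) auto
  qed
next
  fix n1 n2 :: "nat list" and r :: real
  assume h: "valid_cfg n1 \<and> valid_cfg n2 \<and> mset n2 \<subseteq># mset n1 \<and> r \<ge> 0"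
  have l2: "length n1 \<ge> 2" "length n2 \<ge> 2" using h by (auto simp: valid_cfg_def)
  have la: "length n2 \<le> length n1" using h by (metis size_mset size_mset_mono)
  have so: "\<forall>l<length n2. sort n1 ! l \<le> sort n2 ! l" using h sort_sub by blast
  have m: "n_min n1 \<le> n_min n2"
    proof -
    have "n1 \<noteq> []" "n2 \<noteq> []" using l2 by auto
    moreover have "sort n1 ! 0 \<le> sort n2 ! 0" using so l2 by (metis less_le_trans pos2)
    ultimately show ?thesis by (simp add: nmin_eq)
  qed
  show "dmt n1 r \<le> dmt n2 r"
  proof (cases "r > real (n_min n1)")
    case True thus ?thesis using dmt_nonneg h by (simp add: dmt_def)
  next
    case False
    have c: "\<And>i. c_coef n1 i \<le> c_coef n2 i" using la l2 so by (intro c_le) auto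
    show ?thesis using False m h d_cmp[OF _ m c] by (intro dmt_cmp) auto
  qed
qed

end
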